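(* Let $G$ be a directed acyclic graph with $n$ vertices labelled $v_1,\ldots,v_n$ in a topological order (every edge goes from some $v_a$ to some $v_b$ with $a<b$), with real edge lengths, and let $\varepsilon>0$ and $q=(1+\varepsilon)^{1/(n+1)}$. Let $\tau$ and $\tau'$ be the functions defined in the context. Then for all integers $i,j$ with $1\le i\le n$ and $i\le j$, $$\tau(v_i,q^{j-i})\;\le\;\tau'(v_i,q^j)\;\le\;\tau(v_i,q^j).$$
   Context: For a vertex $v_i$ and a real number $x\ge 0$, $\tau(v_i,x)$ is the infimum of all real $L'$ such that there are at least $x$ directed paths from $v_1$ to $v_i$ of length (sum of edge lengths) at most $L'$, with $\inf\emptyset=\infty$; the trivial path from $v_1$ to itself has length $0$, so $\tau(v_1,0)=-\infty$, $\tau(v_1,x)=0$ for $0<x\le 1$, $\tau(v_1,x)=\infty$ for $x>1$. For a vertex $v_i$ with $i>1$, let $p_1,\ldots,p_d$ be the tails of the edges entering $v_i$ and $l_1,\ldots,l_d$ the lengths of these edges. The function $\tau'$ is defined on pairs $(v_i,y)$ with $y=0$ or $y=q^j$ for an integer $j$ by: $\tau'(v_1,0)=-\infty$, $\tau'(v_1,y)=0$ for $0<y\le 1$, $\tau'(v_1,y)=\infty$ for $y>1$, and for $i>1$, $$\tau'(v_i,q^j)=\min_{\substack{\alpha_1,\ldots,\alpha_d\ge 0\\ \sum_s\alpha_s=1}}\ \max_{s}\Big(\tau'\big(p_s,q^{\lfloor j+\log_q\alpha_s\rfloor}\big)+l_s\Big),$$ where $q^{\lfloor j+\log_q\alpha_s\rfloor}$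 is interpreted as $0$ when $\alpha_s=0$, and $\tau'(v_i,0)=-\infty$ for every $i$. *)

theory Defs
  imports Complex_Main "HOL-Library.Extended_Real"
begin

text \<open>A weighted directed (multi)graph on vertices 1..n is a list of edges (tail, head, length).
  Edge e (an index < length E) goes from etail E e to ehead E e with length elen E e.\<close>

type_synonym wgraph = "(nat \<times> nat \<times> real) list"

definition etail :: "wgraph \<Rightarrow> nat \<Rightarrow> nat" where "etail E e = fst (E ! e)"
definition ehead :: "wgraph \<Rightarrow> nat \<Rightarrow> nat" where "ehead E e = fst (snd (E ! e))"
definition elen  :: "wgraph \<Rightarrow> nat \<Rightarrow> real" where "elen E e = snd (snd (E ! e))"

fun is_path :: "wgraph \<Rightarrow> nat \<Rightarrow> nat \<Rightarrow> nat list \<Rightarrow> bool" where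
  "is_path E u v [] = (u = v)"
| "is_path E u v (e # es) = (e < length E \<and> etail E e = u \<and> is_path E (ehead E e) v es)"

definition path_len :: "wgraph \<Rightarrow> nat list \<Rightarrow> real" where
  "path_len E es = (\<Sum>e\<leftarrow>es. elen E e)"

definition tau :: "wgraph \<Rightarrow> nat \<Rightarrow> real \<Rightarrow> ereal" where
  "tau E i x = Inf {ereal L | L. x \<le> real (card {es. is_path E 1 i es \<and> path_len E es \<le> L})}"

definition in_edges :: "wgraph \<Rightarrow> nat \<Rightarrow> nat set" where
  "in_edges E i = {e. e < length E \<and> ehead E e = i}"

text \<open>tau'(v_i, y) with y encoded as: None = 0, Some j = q^j.
  Auxiliary recursion on a depth counter k; tau' E q i = tau'_aux E q i i.\<close>
primrec tau'_aux :: "wgraph \<Rightarrow> real \<Rightarrow> nat \<Rightarrow> nat \<Rightarrow> int option \<Rightarrow> ereal" where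
  "tau'_aux E q 0 i y =
     (case y of None \<Rightarrow> -\<infinity> | Some j \<Rightarrow> (if q powi j \<le> 1 then 0 else \<infinity>))"
| "tau'_aux E q (Suc k) i y =
     (if i = 1 then (case y of None \<Rightarrow> -\<infinity> | Some j \<Rightarrow> (if q powi j \<le> 1 then 0 else \<infinity>))
      else (case y of None \<Rightarrow> -\<infinity>
            | Some j \<Rightarrow>
               (INF \<alpha> \<in> {\<alpha> :: nat \<Rightarrow> real. (\<forall>e \<in> in_edges E i. 0 \<le> \<alpha> e) \<and> (\<Sum>e \<in> in_edges E i. \<alpha> e) = 1}.
                  (SUP e \<in> in_edges E i.
                     tau'_aux E q k (etail E e)
                       (if \<alpha> e = 0 then None else Some \<lfloor>real_of_int j + log q (\<alpha> e)\<rfloor>)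
                     + ereal (elen E e)))))"

definition tau' :: "wgraph \<Rightarrow> real \<Rightarrow> nat \<Rightarrow> int option \<Rightarrow> ereal" where
  "tau' E q i y = tau'_aux E q i i y"

end

theory Submission
  imports Defs
begin

definition PP :: "wgraph \<Rightarrow> nat \<Rightarrow> nat \<Rightarrow> real \<Rightarrow> nat list set" where
  "PP E u v L = {es. is_path E u v es \<and> path_len E es \<le> L}"

lemma tau_PP: "tau E i x = Inf {ereal L | L. x \<le> real (card (PP E 1 i L))}"
  unfolding tau_def PP_def by simp

lemma is_path_snoc:
  "is_path E u v (es @ [e]) \<longleftrightarrow> e < length E \<and> ehead E e = v \<and> is_path E u (etail E e) es"
  by (induction es arbitrary: u) auto

lemma path_len_snoc: "path_len E (es @ [e]) = path_len E es + elen E e"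
  unfolding path_len_def by simp

lemma path_mono:
  assumes topo: "\<forall>(a, b, l) \<in> set E. 1 \<le> a \<and> a < b"
  shows "is_path E u v es \<Longrightarrow> u + length es \<le> v"
proof (induction es arbitrary: u)
  case Nil then show ?case by simp
next
  case (Cons e es)
  then have e: "e < length E" "etail E e = u" "is_path E (ehead E e) v es" by auto
  have "E ! e \<in> set E" using e by simp
  moreover obtain a b l where "E ! e = (a, b, l)" by (metis prod_cases3)
  ultimately have "etail E e < ehead E e" using topo unfolding etail_def ehead_def
    by fastforce
  with Cons.IH[OF e(3)] e(2) show ?case by simp
qed

lemma path_set: "is_path E u v es \<Longrightarrow> set es \<subseteq> {..<length E}"
  by (induction es arbitrary: u) auto

lemma finite_PP:
  assumes topo: "\<forall>(a, b, l) \<in> set E. 1 \<le> a \<and> a < b"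
  shows "finite (PP E u v L)"
proof -
  have "PP E u v L \<subseteq> {xs. set xs \<subseteq> {..<length E} \<and> length xs \<le> v}"
    using path_set path_mono[OF topo] unfolding PP_def by fastforce
  moreover have "finite {xs. set xs \<subseteq> {..<length E} \<and> length xs \<le> v}"
    by (rule finite_lists_length_le) simp
  ultimately show ?thesis by (rule finite_subset)
qed

lemma finite_in_edges: "finite (in_edges E v)"
  unfolding in_edges_def by simp

lemma PP_decomp:
  assumes "u \<noteq> v"
  shows "PP E u v L = (\<Union>e\<in>in_edges E v. (\<lambda>es. es @ [e]) ` PP E u (etail E e) (L - elen E e))"
proof
  show "PP E u v L \<subseteq> (\<Union>e\<in>in_edges E v. (\<lambda>es. es @ [e]) ` PP E u (etail E e) (L - elen E e))"
  proof
    fix es assume h: "es \<in> PP E u v L"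
    then have "es \<noteq> []" using assms unfolding PP_def by auto
    then obtain es' e where es: "es = es' @ [e]" by (metis rev_exhaust)
    show "es \<in> (\<Union>e\<in>in_edges E v. (\<lambda>es. es @ [e]) ` PP E u (etail E e) (L - elen E e))"
      using h unfolding es PP_def in_edges_def by (auto simp: is_path_snoc path_len_snoc)
  qed
next
  show "(\<Union>e\<in>in_edges E v. (\<lambda>es. es @ [e]) ` PP E u (etail E e) (L - elen E e)) \<subseteq> PP E u v L"
    unfolding PP_def in_edges_def by (auto simp: is_path_snoc path_len_snoc)
qed

lemma card_PP:
  assumes topo: "\<forall>(a, b, l) \<in> set E. 1 \<le> a \<and> a < b" and "u \<noteq> v"
  shows "card (PP E u v L) = (\<Sum>e\<in>in_edges E v. card (PP E u (etail E e) (L - elen E e)))"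
proof -
  have "card (PP E u v L) = (\<Sum>e\<in>in_edges E v. card ((\<lambda>es. es @ [e]) ` PP E u (etail E e) (L - elen E e)))"
    unfolding PP_decomp[OF assms(2)]
    by (rule card_UN_disjoint) (auto simp: finite_in_edges finite_PP[OF topo])
  also have "\<dots> = (\<Sum>e\<in>in_edges E v. card (PP E u (etail E e) (L - elen E e)))"
    by (rule sum.cong) (auto intro!: card_image simp: inj_on_def)
  finally show ?thesis .
qed

lemma card_PP_mono:
  assumes topo: "\<forall>(a, b, l) \<in> set E. 1 \<le> a \<and> a < b" and "L \<le> L'"
  shows "card (PP E u v L) \<le> card (PP E u v L')"
  by (rule card_mono[OF finite_PP[OF topo]]) (use assms(2) in \<open>auto simp: PP_def\<close>)

lemma PP_11:
  assumes topo: "\<forall>(a, b, l) \<in> set E. 1 \<le> a \<and> a < b"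
  shows "PP E 1 1 L = (if 0 \<le> L then {[]} else {})"
proof -
  have "is_path E 1 1 es \<Longrightarrow> es = []" for es
    using path_mono[OF topo, of 1 1 es] by auto
  then show ?thesis unfolding PP_def by (auto simp: path_len_def) (metis list.simps(8) sum_list.Nil)
qed

lemma tau'_None: "tau'_aux E q k t None = -\<infinity>"
  by (cases k) auto

lemma tau'_Suc:
  "i \<noteq> 1 \<Longrightarrow> tau'_aux E q (Suc k) i (Some j) =
     (INF \<alpha> \<in> {\<alpha> :: nat \<Rightarrow> real. (\<forall>e \<in> in_edges E i. 0 \<le> \<alpha> e) \<and> (\<Sum>e \<in> in_edges E i. \<alpha> e) = 1}.
                  (SUP e \<in> in_edges E i.
                     tau'_aux E q k (etail E e)
                       (if \<alpha> e = 0 then None else Some \<lfloor>real_of_int j + log q (\<alpha> e)\<rfloor>)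
                     + ereal (elen E e)))"
  by simp

lemma tau'_one: "tau'_aux E q (Suc k) 1 (Some j) = (if q powi j \<le> 1 then 0 else \<infinity>)"
  by simp

lemma in_edge_tail:
  assumes topo: "\<forall>(a, b, l) \<in> set E. 1 \<le> a \<and> a < b" and "e \<in> in_edges E v"
  shows "1 \<le> etail E e \<and> etail E e < v"
proof -
  have "E ! e \<in> set E" "ehead E e = v" using assms(2) unfolding in_edges_def by auto
  moreover obtain a b l where "E ! e = (a, b, l)" by (metis prod_cases3)
  ultimately show ?thesis using topo unfolding etail_def ehead_def by fastforce
qed

lemma powi_powr: "0 < (q::real) \<Longrightarrow> q powi n = q powr real_of_int n"
  by (simp add: powr_real_of_int')

lemma pow_up:
  fixes q a :: real
  assumes "1 < q" "0 < a"
  shows "q powi \<lfloor>real_of_int j + log q a\<rfloor> \<le> q powi j * a"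
proof -
  have "q powi \<lfloor>real_of_int j + log q a\<rfloor> = q powr real_of_int \<lfloor>real_of_int j + log q a\<rfloor>"
    using assms by (intro powi_powr) auto
  also have "\<dots> \<le> q powr (real_of_int j + log q a)"
    using assms by (intro powr_mono) auto
  also have "\<dots> = q powr real_of_int j * a"
    using assms by (simp add: powr_add)
  also have "\<dots> = q powi j * a"
    using assms by (simp add: powi_powr)
  finally show ?thesis .
qed

lemma pow_lo:
  fixes q a :: real and t v j :: int
  assumes "1 < q" "0 < a" "t + 1 \<le> v"
  shows "q powi (j - v) * a \<le> q powi (\<lfloor>real_of_int j + log q a\<rfloor> - t)"
proof -
  have "q powi (j - v) * a = q powr (real_of_int (j - v)) * q powr (log q a)"
    using assms by (simp only: powi_powr[of q "j - v"]) simp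
  also have "\<dots> = q powr (real_of_int (j - v) + log q a)"
    by (simp add: powr_add)
  also have "\<dots> \<le> q powr real_of_int (\<lfloor>real_of_int j + log q a\<rfloor> - t)"
  proof (intro powr_mono)
    have "real_of_int j + log q a - 1 < real_of_int \<lfloor>real_of_int j + log q a\<rfloor>"
      by linarith
    moreover have "real_of_int (t + 1) \<le> real_of_int v" using assms(3) by (simp only: of_int_le_iff)
    ultimately show "real_of_int (j - v) + log q a \<le> real_of_int (\<lfloor>real_of_int j + log q a\<rfloor> - t)"
      by (simp only: of_int_diff of_int_add)
  qed (use assms in auto)
  also have "\<dots> = q powi (\<lfloor>real_of_int j + log q a\<rfloor> - t)"
    using assms by (intro powi_powr[symmetric]) auto
  finally show ?thesis .
qed

lemma upper:
  assumes topo: "\<forall>(a, b, l) \<in> set E. 1 \<le> a \<and> a < b" and q: "1 < q"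
  shows "1 \<le> v \<Longrightarrow> v \<le> k \<Longrightarrow> tau'_aux E q k v (Some j) \<le> tau E v (q powi j)"
proof (induction k arbitrary: v j)
  case 0 then show ?case by simp
next
  case (Suc k)
  have qpos: "0 < q powi j" using q by simp
  show ?case unfolding tau_PP
  proof (rule Inf_greatest, clarify)
    fix L assume L: "q powi j \<le> real (card (PP E 1 v L))"
    show "tau'_aux E q (Suc k) v (Some j) \<le> ereal L"
    proof (cases "v = 1")
      case True
      have "card (PP E 1 v L) > 0" using L qpos by linarith
      then have "0 \<le> L" and "card (PP E 1 v L) = 1" using PP_11[OF topo, of L] True
        by (auto split: if_splits)
      then show ?thesis using True L by simp
    next
      case False
      define c where "c e = real (card (PP E 1 (etail E e) (L - elen E e)))" for e
      define C where "C = real (card (PP E 1 v L))"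
      have C: "C = (\<Sum>e\<in>in_edges E v. c e)"
        unfolding C_def c_def card_PP[OF topo False[symmetric]] by simp
      have Cpos: "0 < C" using L qpos C_def by linarith
      define \<alpha> where "\<alpha> e = c e / C" for e
      have \<alpha>A: "\<alpha> \<in> {\<alpha> :: nat \<Rightarrow> real. (\<forall>e \<in> in_edges E v. 0 \<le> \<alpha> e) \<and> (\<Sum>e \<in> in_edges E v. \<alpha> e) = 1}"
      proof -
        have "(\<Sum>e\<in>in_edges E v. \<alpha> e) = (\<Sum>e\<in>in_edges E v. c e) / C"
          unfolding \<alpha>_def by (simp add: sum_divide_distrib)
        also have "\<dots> = 1" using Cpos C by simp
        finally show ?thesis using Cpos unfolding \<alpha>_def c_def by auto
      qed
      have "tau'_aux E q (Suc k) v (Some j) \<le>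
          (SUP e \<in> in_edges E v.
                     tau'_aux E q k (etail E e)
                       (if \<alpha> e = 0 then None else Some \<lfloor>real_of_int j + log q (\<alpha> e)\<rfloor>)
                     + ereal (elen E e))"
        unfolding tau'_Suc[OF False] by (rule INF_lower[OF \<alpha>A])
      also have "\<dots> \<le> ereal L"
      proof (rule SUP_least)
        fix e assume e: "e \<in> in_edges E v"
        show "tau'_aux E q k (etail E e)
                       (if \<alpha> e = 0 then None else Some \<lfloor>real_of_int j + log q (\<alpha> e)\<rfloor>)
                     + ereal (elen E e) \<le> ereal L"
        proof (cases "\<alpha> e = 0")
          case True then show ?thesis by (simp add: tau'_None)
        next
          case False
          have ap: "0 < \<alpha> e" using False \<alpha>A e by force
          define j' where "j' = \<lfloor>real_of_int j + log q (\<alpha> e)\<rfloor>"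
          have t: "1 \<le> etail E e" "etail E e \<le> k" using in_edge_tail[OF topo e] Suc.prems by auto
          have "q powi j' \<le> q powi j * \<alpha> e" unfolding j'_def by (rule pow_up[OF q ap])
          also have "\<dots> \<le> C * \<alpha> e" using L ap C_def by (intro mult_right_mono) auto
          also have "\<dots> = c e" using Cpos unfolding \<alpha>_def by simp
          finally have le: "q powi j' \<le> c e" .
          have "tau E (etail E e) (q powi j') \<le> ereal (L - elen E e)"
            unfolding tau_PP by (rule Inf_lower) (use le c_def in auto)
          then have "tau'_aux E q k (etail E e) (Some j') \<le> ereal (L - elen E e)"
            using Suc.IH[OF t] by (rule order_trans[rotated])
          then show ?thesis using False unfolding j'_def[symmetric]
            by (cases "tau'_aux E q k (etail E e) (Some j')") auto
        qed
      qed
      finally show ?thesis .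
    qed
  qed
qed

lemma lower:
  assumes topo: "\<forall>(a, b, l) \<in> set E. 1 \<le> a \<and> a < b" and q: "1 < q"
  shows "1 \<le> v \<Longrightarrow> v \<le> k \<Longrightarrow> tau E v (q powi (j - int v)) \<le> tau'_aux E q k v (Some j)"
proof (induction k arbitrary: v j)
  case 0 then show ?case by simp
next
  case (Suc k)
  show ?case
  proof (cases "v = 1")
    case True
    show ?thesis
    proof (cases "q powi j \<le> 1")
      case False then show ?thesis using True by simp
    next
      case qj: True
      have "j \<le> 0"
      proof (rule ccontr)
        assume "\<not> j \<le> 0"
        then have "0 < real_of_int j" by simp
        then have "1 < q powr real_of_int j" using q by (intro gr_one_powr) auto
        then show False using qj q by (simp add: powi_powr)
      qed
      then have "q powr real_of_int (j - 1) \<le> q powr 0" using q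
        by (intro powr_mono) auto
      then have "q powr real_of_int (j - 1) \<le> 1" using q by simp
      then have x1: "q powi (j - int v) \<le> 1" using q True by (simp add: powi_powr)
      have "tau E v (q powi (j - int v)) \<le> ereal 0"
        unfolding tau_PP by (rule Inf_lower) (use x1 True PP_11[OF topo, of 0] in auto)
      then show ?thesis using True qj by (simp add: zero_ereal_def)
    qed
  next
    case False
    show ?thesis unfolding tau'_Suc[OF False]
    proof (rule INF_greatest)
      fix \<alpha> assume \<alpha>A: "\<alpha> \<in> {\<alpha> :: nat \<Rightarrow> real. (\<forall>e \<in> in_edges E v. 0 \<le> \<alpha> e) \<and> (\<Sum>e \<in> in_edges E v. \<alpha> e) = 1}"
      define M where "M = (SUP e \<in> in_edges E v.
                     tau'_aux E q k (etail E e)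
                       (if \<alpha> e = 0 then None else Some \<lfloor>real_of_int j + log q (\<alpha> e)\<rfloor>)
                     + ereal (elen E e))"
      show "tau E v (q powi (j - int v)) \<le> M"
      proof (rule dense_ge)
        fix y assume My: "M < y"
        show "tau E v (q powi (j - int v)) \<le> y"
        proof (cases y)
          case PInf then show ?thesis by simp
        next
          case MInf then show ?thesis using My by simp
        next
          case (real L)
          define c where "c e = real (card (PP E 1 (etail E e) (L - elen E e)))" for e
          have C: "real (card (PP E 1 v L)) = (\<Sum>e\<in>in_edges E v. c e)"
            unfolding c_def card_PP[OF topo False[symmetric]] by simp
          have ce: "q powi (j - int v) * \<alpha> e \<le> c e" if e: "e \<in> in_edges E v" for e
          proof (cases "\<alpha> e = 0")
            case True then show ?thesis by (simp add: c_def)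
          next
            case False
            have ap: "0 < \<alpha> e" using False \<alpha>A e by force
            define j' where "j' = \<lfloor>real_of_int j + log q (\<alpha> e)\<rfloor>"
            define t where "t = etail E e"
            have t: "1 \<le> t" "t \<le> k" "t < v" using in_edge_tail[OF topo e] Suc.prems t_def by auto
            have "tau'_aux E q k t (Some j') + ereal (elen E e) \<le> M"
              unfolding M_def t_def j'_def using False by (intro SUP_upper2[OF e]) auto
            moreover have "tau E t (q powi (j' - int t)) \<le> tau'_aux E q k t (Some j')"
              by (rule Suc.IH[OF t(1,2)])
            ultimately have "tau E t (q powi (j' - int t)) + ereal (elen E e) < ereal L"
              using My real by (meson add_right_mono order.strict_trans1 order.trans)
            then have "tau E t (q powi (j' - int t)) < ereal (L - elen E e)"
              by (cases "tau E t (q powi (j' - int t))") auto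
            then obtain z where z: "z \<in> {ereal L | L. q powi (j' - int t) \<le> real (card (PP E 1 t L))}"
                and zl: "z < ereal (L - elen E e)"
              unfolding tau_PP Inf_less_iff by blast
            then obtain L' where L': "z = ereal L'" "q powi (j' - int t) \<le> real (card (PP E 1 t L'))" by blast
            have "card (PP E 1 t L') \<le> card (PP E 1 t (L - elen E e))"
              using zl L' by (intro card_PP_mono[OF topo]) auto
            then have "q powi (j' - int t) \<le> c e" using L'(2) unfolding c_def t_def by linarith
            moreover have "q powi (j - int v) * \<alpha> e \<le> q powi (j' - int t)"
              unfolding j'_def by (rule pow_lo[OF q ap]) (use t in simp)
            ultimately show ?thesis by linarith
          qed
          have "q powi (j - int v) = (\<Sum>e\<in>in_edges E v. q powi (j - int v) * \<alpha> e)"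
            using \<alpha>A by (simp add: sum_distrib_left[symmetric])
          also have "\<dots> \<le> (\<Sum>e\<in>in_edges E v. c e)" by (rule sum_mono) (rule ce)
          finally have "q powi (j - int v) \<le> real (card (PP E 1 v L))" using C by simp
          then show ?thesis unfolding tau_PP real by (intro Inf_lower) auto
        qed
      qed
    qed
  qed
qed

theorem lemma1:
  fixes E :: wgraph and n :: nat and \<epsilon> q :: real
  assumes topo: "\<forall>(a, b, l) \<in> set E. 1 \<le> a \<and> a < b \<and> b \<le> n"
    and eps: "\<epsilon> > 0"
    and q_def: "q = (1 + \<epsilon>) powr (1 / (real n + 1))"
  shows "\<forall>(i::nat) (j::int). 1 \<le> i \<and> i \<le> n \<and> int i \<le> j \<longrightarrow>
           tau E i (q powi (j - int i)) \<le> tau' E q i (Some j) \<and>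
           tau' E q i (Some j) \<le> tau E i (q powi j)"
proof (intro allI impI)
  fix i :: nat and j :: int
  assume h: "1 \<le> i \<and> i \<le> n \<and> int i \<le> j"
  have topo': "\<forall>(a, b, l) \<in> set E. 1 \<le> a \<and> a < b" using topo by auto
  have q: "1 < q" unfolding q_def using eps by (intro gr_one_powr) auto
  show "tau E i (q powi (j - int i)) \<le> tau' E q i (Some j) \<and>
           tau' E q i (Some j) \<le> tau E i (q powi j)"
    unfolding tau'_def using lower[OF topo' q] upper[OF topo' q] h by auto
qed

end
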